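(* Let $X$ be a shift space, $Y$ an irreducible shift space, and $\phi : X \to Y$ an open code which is bi-closing. Then $\phi$ is constant-to-one.
   Context: Shift spaces are closed shift-invariant subsets of $\mathcal{A}^{\mathbb{Z}}$; a code is a continuous shift-commuting map. Irreducible: for all words $u,v$ of $Y$ there is $w$ with $uwv$ a word of $Y$. Open: images of open sets are open. Constant-to-one: all fibers finite with cardinality independent of $y$. Bi-closing: never identifies two distinct left asymptotic points nor two distinct right asymptotic points, where $x,\bar x$ are left (right) asymptotic if $d(\sigma^{-n}x,\sigma^{-n}\bar x)\to0$ ($d(\sigma^{n}x,\sigma^{n}\bar x)\to0$), $d(x,\bar x)=2^{-k}$ with $k$ maximal such that $x_{[-k,k]}=\bar x_{[-k,k]}$. *)

theory Defs
  imports Main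
begin

definition shift_pow :: "int \<Rightarrow> (int \<Rightarrow> 'a) \<Rightarrow> (int \<Rightarrow> 'a)" where
  "shift_pow k x = (\<lambda>i. x (i + k))"

abbreviation shift :: "(int \<Rightarrow> 'a) \<Rightarrow> (int \<Rightarrow> 'a)" where
  "shift \<equiv> shift_pow 1"

text \<open>x and y agree on the central window [-k,k]; d(x,y) \<le> 2^-k iff they agree there.\<close>
definition agree :: "nat \<Rightarrow> (int \<Rightarrow> 'a) \<Rightarrow> (int \<Rightarrow> 'a) \<Rightarrow> bool" where
  "agree k x y \<longleftrightarrow> (\<forall>i. - int k \<le> i \<and> i \<le> int k \<longrightarrow> x i = y i)"

text \<open>Closed subsets of A^Z (product topology = topology of the metric d).\<close>
definition closed_set :: "(int \<Rightarrow> 'a::finite) set \<Rightarrow> bool" where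
  "closed_set X \<longleftrightarrow> (\<forall>x. (\<forall>k. \<exists>y\<in>X. agree k x y) \<longrightarrow> x \<in> X)"

definition shift_space :: "(int \<Rightarrow> 'a::finite) set \<Rightarrow> bool" where
  "shift_space X \<longleftrightarrow> closed_set X \<and> shift ` X = X"

definition open_in_space :: "(int \<Rightarrow> 'a) set \<Rightarrow> (int \<Rightarrow> 'a) set \<Rightarrow> bool" where
  "open_in_space X U \<longleftrightarrow> U \<subseteq> X \<and> (\<forall>x\<in>U. \<exists>k. \<forall>y\<in>X. agree k x y \<longrightarrow> y \<in> U)"

definition occurs :: "'a list \<Rightarrow> (int \<Rightarrow> 'a) \<Rightarrow> bool" where
  "occurs w x \<longleftrightarrow> (\<exists>i. \<forall>j<length w. x (i + int j) = w ! j)"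

definition is_word :: "(int \<Rightarrow> 'a) set \<Rightarrow> 'a list \<Rightarrow> bool" where
  "is_word Y w \<longleftrightarrow> (\<exists>y\<in>Y. occurs w y)"

definition irreducible :: "(int \<Rightarrow> 'a) set \<Rightarrow> bool" where
  "irreducible Y \<longleftrightarrow>
     (\<forall>u v. is_word Y u \<and> is_word Y v \<longrightarrow> (\<exists>w. is_word Y (u @ w @ v)))"

definition is_code :: "(int \<Rightarrow> 'a::finite) set \<Rightarrow> (int \<Rightarrow> 'b::finite) set
    \<Rightarrow> ((int \<Rightarrow> 'a) \<Rightarrow> (int \<Rightarrow> 'b)) \<Rightarrow> bool" where
  "is_code X Y \<phi> \<longleftrightarrow>
     (\<forall>x\<in>X. \<phi> x \<in> Y) \<and>
     (\<forall>x\<in>X. \<phi> (shift x) = shift (\<phi> x)) \<and>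
     (\<forall>x\<in>X. \<forall>n. \<exists>m. \<forall>x'\<in>X. agree m x x' \<longrightarrow> agree n (\<phi> x) (\<phi> x'))"

definition open_code :: "(int \<Rightarrow> 'a) set \<Rightarrow> (int \<Rightarrow> 'b) set
    \<Rightarrow> ((int \<Rightarrow> 'a) \<Rightarrow> (int \<Rightarrow> 'b)) \<Rightarrow> bool" where
  "open_code X Y \<phi> \<longleftrightarrow> (\<forall>U. open_in_space X U \<longrightarrow> open_in_space Y (\<phi> ` U))"

text \<open>d(sigma^n x, sigma^n y) \<rightarrow> 0 (n \<rightarrow> \<infinity>), unfolded: for every window size k,
  eventually sigma^n x and sigma^n y agree on [-k,k].\<close>
definition right_asymptotic :: "(int \<Rightarrow> 'a) \<Rightarrow> (int \<Rightarrow> 'a) \<Rightarrow> bool" where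
  "right_asymptotic x y \<longleftrightarrow>
     (\<forall>k. \<exists>N. \<forall>n\<ge>N. agree k (shift_pow (int n) x) (shift_pow (int n) y))"

definition left_asymptotic :: "(int \<Rightarrow> 'a) \<Rightarrow> (int \<Rightarrow> 'a) \<Rightarrow> bool" where
  "left_asymptotic x y \<longleftrightarrow>
     (\<forall>k. \<exists>N. \<forall>n\<ge>N. agree k (shift_pow (- int n) x) (shift_pow (- int n) y))"

definition bi_closing :: "(int \<Rightarrow> 'a) set \<Rightarrow> ((int \<Rightarrow> 'a) \<Rightarrow> (int \<Rightarrow> 'b)) \<Rightarrow> bool" where
  "bi_closing X \<phi> \<longleftrightarrow>
     (\<forall>x\<in>X. \<forall>x'\<in>X. x \<noteq> x' \<and> left_asymptotic x x' \<longrightarrow> \<phi> x \<noteq> \<phi> x') \<and>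
     (\<forall>x\<in>X. \<forall>x'\<in>X. x \<noteq> x' \<and> right_asymptotic x x' \<longrightarrow> \<phi> x \<noteq> \<phi> x')"

definition constant_to_one :: "(int \<Rightarrow> 'a) set \<Rightarrow> (int \<Rightarrow> 'b) set
    \<Rightarrow> ((int \<Rightarrow> 'a) \<Rightarrow> (int \<Rightarrow> 'b)) \<Rightarrow> bool" where
  "constant_to_one X Y \<phi> \<longleftrightarrow>
     (\<exists>c. \<forall>y\<in>Y. finite {x\<in>X. \<phi> x = y} \<and> card {x\<in>X. \<phi> x = y} = c)"

end

theory Submission
  imports Defs
begin


definition pat :: "nat \<Rightarrow> (int \<Rightarrow> 'a) \<Rightarrow> 'a list" where
  "pat k f = map f [- int k..int k]"

lemma agree_pat: "agree k f g \<longleftrightarrow> pat k f = pat k g"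
  unfolding agree_def pat_def by auto

lemma pat_len: "length (pat k f) = 2*k+1"
  by (simp add: pat_def)

lemma finite_pats: "finite (range (pat k :: (int \<Rightarrow> 'a::finite) \<Rightarrow> _))"
proof (rule finite_subset)
  show "range (pat k :: (int \<Rightarrow> 'a::finite) \<Rightarrow> _) \<subseteq> {xs. set xs \<subseteq> UNIV \<and> length xs = 2*k+1}"
    using pat_len by auto
  show "finite {xs :: 'a list. set xs \<subseteq> UNIV \<and> length xs = 2*k+1}"
    by (rule finite_lists_length_eq) simp
qed

lemma agree_mono: "m \<le> k \<Longrightarrow> agree k f g \<Longrightarrow> agree m f g"
  unfolding agree_def by force

lemma agree_sym: "agree k f g \<Longrightarrow> agree k g f"
  unfolding agree_def by force

lemma agree_trans: "agree k f g \<Longrightarrow> agree k g h \<Longrightarrow> agree k f h"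
  unfolding agree_def by force

lemma agree_all: "(\<And>k. agree k f g) \<Longrightarrow> f = g"
proof
  fix i assume "\<And>k. agree k f g"
  then have "agree (nat \<bar>i\<bar>) f g" .
  then show "f i = g i" unfolding agree_def using abs_ge_self[of i] abs_ge_minus_self[of i] by auto
qed

lemma cluster:
  fixes s :: "nat \<Rightarrow> int \<Rightarrow> 'c::finite"
  assumes "infinite I"
  shows "\<exists>c. \<forall>k N. \<exists>n\<in>I. N \<le> n \<and> agree k c (s n)"
proof -
  define sel where "sel k J = (SOME n0. n0 \<in> J \<and> infinite {n\<in>J. pat k (s n) = pat k (s n0)})" for k J
  define step where "step k J = {n\<in>J. pat k (s n) = pat k (s (sel k J))}" for k J
  have st: "infinite (step k J)" if inf: "infinite J" for k J
  proof -
    have fin: "finite ((\<lambda>n. pat k (s n)) ` J)"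
      by (rule finite_subset[OF _ finite_pats[of k]]) auto
    obtain n0 where "n0 \<in> J" "infinite {n\<in>J. pat k (s n) = pat k (s n0)}"
      using pigeonhole_infinite[OF inf fin] by blast
    then have "sel k J \<in> J \<and> infinite {n\<in>J. pat k (s n) = pat k (s (sel k J))}"
      unfolding sel_def by (rule someI[where x=n0, OF conjI])
    then show ?thesis unfolding step_def by auto
  qed
  define J where "J = rec_nat (step 0 I) (\<lambda>k Jk. step (Suc k) Jk)"
  have J0: "J 0 = step 0 I" and JS: "J (Suc k) = step (Suc k) (J k)" for k
    unfolding J_def by auto
  have Jinf: "infinite (J k)" for k
    by (induction k) (auto simp: J0 JS st assms)
  have Jsub: "J (Suc k) \<subseteq> J k" for k unfolding JS step_def by auto
  have Jdec: "J l \<subseteq> J k" if "k \<le> l" for k l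
    using that
  proof (induction l)
    case 0 then show ?case by auto
  next
    case (Suc l) then show ?case using Jsub[of l] by (cases "k = Suc l") auto
  qed
  have Jsubl: "J 0 \<subseteq> I" unfolding J0 step_def by auto
  have Jpat: "pat k (s n) = pat k (s n')" if "n \<in> J k" "n' \<in> J k" for k n n'
    using that by (cases k) (auto simp: J0 JS step_def)
  define c where "c i = s (SOME n. n \<in> J (nat \<bar>i\<bar>)) i" for i
  have cJ: "agree k c (s n)" if "n \<in> J k" for k n
    unfolding agree_def
  proof (intro allI impI)
    fix i :: int assume i: "- int k \<le> i \<and> i \<le> int k"
    define j where "j = nat \<bar>i\<bar>"
    have jk: "j \<le> k" using i j_def by auto
    have "\<exists>n. n \<in> J j" using Jinf[of j] by (metis ex_in_conv finite.emptyI)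
    then have m: "(SOME n. n \<in> J j) \<in> J j" by (rule someI_ex)
    have nj: "n \<in> J j" using Jdec[OF jk] that by auto
    have "agree j (s (SOME n. n \<in> J j)) (s n)"
      using Jpat[OF m nj] agree_pat by blast
    then have "s (SOME n. n \<in> J j) i = s n i" unfolding agree_def j_def using abs_ge_self[of i] abs_ge_minus_self[of i] by auto
    then show "c i = s n i" unfolding c_def j_def by simp
  qed
  have "\<exists>n\<in>I. N \<le> n \<and> agree k c (s n)" for k N
  proof -
    have "\<not> J k \<subseteq> {..<N}" using Jinf[of k] finite_subset by auto
    then obtain n where "n \<in> J k" "N \<le> n" by (meson lessThan_iff not_le subsetI)
    moreover have "n \<in> I" using Jdec[of 0 k] Jsubl \<open>n \<in> J k\<close> by auto
    ultimately show ?thesis using cJ by blast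
  qed
  then show ?thesis by blast
qed



lemma shift_pow_add: "shift_pow a (shift_pow b x) = shift_pow (a+b) x"
  unfolding shift_pow_def by (simp add: add.commute add.left_commute)

lemma shift_pow_0[simp]: "shift_pow 0 x = x"
  unfolding shift_pow_def by simp

lemma shift_mem:
  assumes inv: "shift ` X = X" and x: "x \<in> X"
  shows "shift_pow j x \<in> X"
proof -
  have p1: "shift x \<in> X" if "x \<in> X" for x using inv that by blast
  have m1: "shift_pow (-1) x \<in> X" if "x \<in> X" for x
  proof -
    have "x \<in> shift ` X" using inv that by simp
    then obtain x' where "x' \<in> X" "x = shift x'" by (rule imageE) simp
    then show ?thesis by (simp add: shift_pow_add)
  qed
  have pos: "shift_pow (int n) x \<in> X" for n
  proof (induction n)
    case 0 then show ?case using x by simp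
  next
    case (Suc n)
    then have "shift (shift_pow (int n) x) \<in> X" by (rule p1)
    then show ?case by (simp add: shift_pow_add add.commute)
  qed
  have neg: "shift_pow (- int n) x \<in> X" for n
  proof (induction n)
    case 0 then show ?case using x by simp
  next
    case (Suc n)
    then have "shift_pow (-1) (shift_pow (- int n) x) \<in> X" by (rule m1)
    then show ?case by (simp add: shift_pow_add)
  qed
  show ?thesis
  proof (cases "j \<ge> 0")
    case True then show ?thesis using pos[of "nat j"] by simp
  next
    case False then show ?thesis using neg[of "nat (-j)"] by simp
  qed
qed

lemma phi_shift:
  assumes inv: "shift ` X = X" and code: "is_code X Y \<phi>" and x: "x \<in> X"
  shows "\<phi> (shift_pow j x) = shift_pow j (\<phi> x)"
proof -
  have c1: "\<phi> (shift x) = shift (\<phi> x)" if "x \<in> X" for x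
    using code that unfolding is_code_def by blast
  have m1: "\<phi> (shift_pow (-1) x) = shift_pow (-1) (\<phi> x)" if "x \<in> X" for x
  proof -
    have x': "shift_pow (-1) x \<in> X" using shift_mem[OF inv that] .
    have "\<phi> x = \<phi> (shift (shift_pow (-1) x))" by (simp add: shift_pow_add)
    also have "\<dots> = shift (\<phi> (shift_pow (-1) x))" using c1[OF x'] .
    finally have "shift_pow (-1) (\<phi> x) = shift_pow (-1) (shift (\<phi> (shift_pow (-1) x)))" by simp
    then show ?thesis by (simp add: shift_pow_add)
  qed
  have pos: "\<phi> (shift_pow (int n) x) = shift_pow (int n) (\<phi> x)" for n
  proof (induction n)
    case 0 then show ?case by simp
  next
    case (Suc n)
    have "\<phi> (shift_pow (int (Suc n)) x) = \<phi> (shift (shift_pow (int n) x))"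
      by (simp add: shift_pow_add add.commute)
    also have "\<dots> = shift (\<phi> (shift_pow (int n) x))" using c1 shift_mem[OF inv x] by blast
    also have "\<dots> = shift_pow (int (Suc n)) (\<phi> x)" using Suc by (simp add: shift_pow_add add.commute)
    finally show ?case .
  qed
  have neg: "\<phi> (shift_pow (- int n) x) = shift_pow (- int n) (\<phi> x)" for n
  proof (induction n)
    case 0 then show ?case by simp
  next
    case (Suc n)
    have "\<phi> (shift_pow (- int (Suc n)) x) = \<phi> (shift_pow (-1) (shift_pow (- int n) x))"
      by (simp add: shift_pow_add)
    also have "\<dots> = shift_pow (-1) (\<phi> (shift_pow (- int n) x))" using m1 shift_mem[OF inv x] by blast
    also have "\<dots> = shift_pow (- int (Suc n)) (\<phi> x)" using Suc by (simp add: shift_pow_add)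
    finally show ?case .
  qed
  show ?thesis
  proof (cases "j \<ge> 0")
    case True then show ?thesis using pos[of "nat j"] by simp
  next
    case False then show ?thesis using neg[of "nat (-j)"] by simp
  qed
qed

definition fib :: "(int \<Rightarrow> 'a) set \<Rightarrow> ((int \<Rightarrow> 'a) \<Rightarrow> (int \<Rightarrow> 'b)) \<Rightarrow> (int \<Rightarrow> 'b) \<Rightarrow> (int \<Rightarrow> 'a) set" where
  "fib X \<phi> y = {x\<in>X. \<phi> x = y}"

lemma fib_shift:
  assumes inv: "shift ` X = X" and code: "is_code X Y \<phi>"
  shows "fib X \<phi> (shift_pow j y) = shift_pow j ` fib X \<phi> y"
proof
  show "shift_pow j ` fib X \<phi> y \<subseteq> fib X \<phi> (shift_pow j y)"
    unfolding fib_def using shift_mem[OF inv] phi_shift[OF inv code] by auto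
  show "fib X \<phi> (shift_pow j y) \<subseteq> shift_pow j ` fib X \<phi> y"
  proof
    fix x assume "x \<in> fib X \<phi> (shift_pow j y)"
    then have x: "x \<in> X" "\<phi> x = shift_pow j y" unfolding fib_def by auto
    have x': "shift_pow (-j) x \<in> X" using shift_mem[OF inv x(1)] .
    have "\<phi> (shift_pow (-j) x) = shift_pow (-j) (shift_pow j y)"
      using phi_shift[OF inv code x(1)] x(2) by simp
    then have "\<phi> (shift_pow (-j) x) = y" by (simp add: shift_pow_add)
    moreover have "x = shift_pow j (shift_pow (-j) x)" by (simp add: shift_pow_add)
    ultimately show "x \<in> shift_pow j ` fib X \<phi> y" using x' unfolding fib_def by blast
  qed
qed

lemma card_fib_shift:
  assumes inv: "shift ` X = X" and code: "is_code X Y \<phi>"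
  shows "card (fib X \<phi> (shift_pow j y)) = card (fib X \<phi> y)"
proof -
  have "inj (shift_pow j :: (int \<Rightarrow> 'a) \<Rightarrow> _)"
    by (rule inj_on_inverseI[where g="shift_pow (-j)"]) (simp add: shift_pow_add)
  then show ?thesis unfolding fib_shift[OF inv code] by (simp add: card_image inj_on_subset)
qed



lemma closed_memI:
  assumes "closed_set X" "\<And>k. \<exists>y\<in>X. agree k x y" shows "x \<in> X"
  using assms unfolding closed_set_def by blast

lemma limit_pair:
  fixes A A' :: "nat \<Rightarrow> int \<Rightarrow> 'a::finite" and X :: "(int \<Rightarrow> 'a) set"
    and \<phi> :: "(int \<Rightarrow> 'a) \<Rightarrow> (int \<Rightarrow> 'b::finite)"
  assumes cl: "closed_set X" and code: "is_code X Y \<phi>" and I: "infinite I"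
    and AX: "\<And>D. D \<in> I \<Longrightarrow> A D \<in> X \<and> A' D \<in> X \<and> \<phi> (A D) = \<phi> (A' D) \<and> A D 0 \<noteq> A' D 0"
    and QP: "\<And>D i. D \<in> I \<Longrightarrow> Q i \<Longrightarrow> nat \<bar>i\<bar> \<le> D \<Longrightarrow> A D i = A' D i"
  shows "\<exists>a\<in>X. \<exists>a'\<in>X. \<phi> a = \<phi> a' \<and> a 0 \<noteq> a' 0 \<and> (\<forall>i. Q i \<longrightarrow> a i = a' i)"
proof -
  define s where "s D = (\<lambda>i. (A D i, A' D i))" for D
  obtain c where c: "\<And>k N. \<exists>n\<in>I. N \<le> n \<and> agree k c (s n)"
    using cluster[OF I, of s] by blast
  define a where "a = (\<lambda>i. fst (c i))"
  define a' where "a' = (\<lambda>i. snd (c i))"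
  have ag: "agree k a (A n) \<and> agree k a' (A' n)" if "agree k c (s n)" for k n
    using that unfolding agree_def a_def a'_def s_def by auto
  have cl1: "\<exists>n\<in>I. N \<le> n \<and> agree k a (A n) \<and> agree k a' (A' n)" for k N
    using c[where k=k and N=N] ag by blast
  have aX: "a \<in> X"
  proof (rule closed_memI[OF cl])
    fix k
    obtain n where "n \<in> I" "agree k a (A n)" using cl1[where k=k and N=0] by blast
    then show "\<exists>y\<in>X. agree k a y" using AX by blast
  qed
  have a'X: "a' \<in> X"
  proof (rule closed_memI[OF cl])
    fix k
    obtain n where "n \<in> I" "agree k a' (A' n)" using cl1[where k=k and N=0] by blast
    then show "\<exists>y\<in>X. agree k a' y" using AX by blast
  qed
  have "a 0 \<noteq> a' 0"
  proof -
    obtain n where "n \<in> I" "agree 0 a (A n)" "agree 0 a' (A' n)" using cl1[where k=0 and N=0] by blast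
    then show ?thesis using AX[of n] unfolding agree_def by auto
  qed
  moreover have "a i = a' i" if "Q i" for i
  proof -
    obtain n where n: "n \<in> I" "nat \<bar>i\<bar> \<le> n" "agree (nat \<bar>i\<bar>) a (A n)" "agree (nat \<bar>i\<bar>) a' (A' n)"
      using cl1[where k="nat \<bar>i\<bar>" and N="nat \<bar>i\<bar>"] by blast
    have "a i = A n i" "a' i = A' n i" using n(3,4) unfolding agree_def
      using abs_ge_self[of i] abs_ge_minus_self[of i] by auto
    then show ?thesis using QP[OF n(1) that n(2)] by simp
  qed
  moreover have "\<phi> a = \<phi> a'"
  proof (rule agree_all)
    fix k
    have cont: "\<forall>x\<in>X. \<forall>n. \<exists>m. \<forall>x'\<in>X. agree m x x' \<longrightarrow> agree n (\<phi> x) (\<phi> x')"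
      using code unfolding is_code_def by blast
    obtain m1 where m1: "\<forall>x'\<in>X. agree m1 a x' \<longrightarrow> agree k (\<phi> a) (\<phi> x')" using cont aX by blast
    obtain m2 where m2: "\<forall>x'\<in>X. agree m2 a' x' \<longrightarrow> agree k (\<phi> a') (\<phi> x')" using cont a'X by blast
    obtain n where n: "n \<in> I" "agree (max m1 m2) a (A n)" "agree (max m1 m2) a' (A' n)"
      using cl1[where k="max m1 m2" and N=0] by blast
    have "agree k (\<phi> a) (\<phi> (A n))" using m1 AX[OF n(1)] agree_mono[OF _ n(2)] by auto
    moreover have "agree k (\<phi> a') (\<phi> (A' n))" using m2 AX[OF n(1)] agree_mono[OF _ n(3)] by auto
    ultimately show "agree k (\<phi> a) (\<phi> a')" using AX[OF n(1)] agree_sym agree_trans by metis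
  qed
  ultimately show ?thesis using aX a'X by blast
qed

lemma separation:
  fixes X :: "(int \<Rightarrow> 'a::finite) set" and \<phi> :: "(int \<Rightarrow> 'a) \<Rightarrow> (int \<Rightarrow> 'b::finite)"
  assumes X: "shift_space X" and code: "is_code X Y \<phi>" and bc: "bi_closing X \<phi>"
  shows "\<exists>D. \<forall>x\<in>X. \<forall>x'\<in>X. \<phi> x = \<phi> x' \<and> agree D x x' \<longrightarrow> x = x'"
proof (rule ccontr)
  assume "\<not> ?thesis"
  then have ex: "\<forall>D. \<exists>x\<in>X. \<exists>x'\<in>X. \<phi> x = \<phi> x' \<and> agree D x x' \<and> x \<noteq> x'" by blast
  have cl: "closed_set X" and inv: "shift ` X = X" using X unfolding shift_space_def by auto
  have "\<exists>a a'. a \<in> X \<and> a' \<in> X \<and> \<phi> a = \<phi> a' \<and> a 0 \<noteq> a' 0 \<and>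
     ((\<forall>i. - int D \<le> i \<and> i < 0 \<longrightarrow> a i = a' i) \<or> (\<forall>i. 0 < i \<and> i \<le> int D \<longrightarrow> a i = a' i))" for D
  proof -
    obtain x x' where xx: "x \<in> X" "x' \<in> X" "\<phi> x = \<phi> x'" "agree D x x'" "x \<noteq> x'" using ex by blast
    then obtain p0 where "x p0 \<noteq> x' p0" by auto
    then obtain p where p: "x p \<noteq> x' p" and pmin: "\<And>q. x q \<noteq> x' q \<Longrightarrow> nat \<bar>p\<bar> \<le> nat \<bar>q\<bar>"
      using ex_has_least_nat[of "\<lambda>p. x p \<noteq> x' p" p0 "\<lambda>p. nat \<bar>p\<bar>"] by blast
    have pD: "int D < \<bar>p\<bar>"
    proof (rule ccontr)
      assume "\<not> int D < \<bar>p\<bar>"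
      then have "- int D \<le> p \<and> p \<le> int D" by auto
      then show False using xx(4) p unfolding agree_def by blast
    qed
    have small: "x q = x' q" if "\<bar>q\<bar> < \<bar>p\<bar>" for q using pmin[of q] that by force
    define a where "a = shift_pow p x"
    define a' where "a' = shift_pow p x'"
    have "a \<in> X" "a' \<in> X" unfolding a_def a'_def using shift_mem[OF inv] xx by auto
    moreover have "\<phi> a = \<phi> a'" unfolding a_def a'_def using phi_shift[OF inv code] xx by simp
    moreover have "a 0 \<noteq> a' 0" unfolding a_def a'_def shift_pow_def using p by simp
    moreover have "(\<forall>i. - int D \<le> i \<and> i < 0 \<longrightarrow> a i = a' i) \<or> (\<forall>i. 0 < i \<and> i \<le> int D \<longrightarrow> a i = a' i)"
    proof (cases "p > 0")
      case True
      have "\<forall>i. - int D \<le> i \<and> i < 0 \<longrightarrow> a i = a' i"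
        unfolding a_def a'_def shift_pow_def using True pD small by auto
      then show ?thesis ..
    next
      case False
      then have "p < 0" using p pD by (cases "p = 0") auto
      have "\<forall>i. 0 < i \<and> i \<le> int D \<longrightarrow> a i = a' i"
        unfolding a_def a'_def shift_pow_def using \<open>p < 0\<close> pD small by auto
      then show ?thesis ..
    qed
    ultimately show ?thesis by blast
  qed
  then obtain A A' where AA: "\<And>D. A D \<in> X \<and> A' D \<in> X \<and> \<phi> (A D) = \<phi> (A' D) \<and> A D 0 \<noteq> A' D 0 \<and>
     ((\<forall>i. - int D \<le> i \<and> i < 0 \<longrightarrow> A D i = A' D i) \<or> (\<forall>i. 0 < i \<and> i \<le> int D \<longrightarrow> A D i = A' D i))"
    by metis
  define L where "L = {D. \<forall>i. - int D \<le> i \<and> i < 0 \<longrightarrow> A D i = A' D i}"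
  define R where "R = {D. \<forall>i. 0 < i \<and> i \<le> int D \<longrightarrow> A D i = A' D i}"
  have "L \<union> R = UNIV" using AA unfolding L_def R_def by blast
  then have "infinite L \<or> infinite R" using infinite_UNIV_nat by (metis finite_UnI)
  then show False
  proof
    assume "infinite L"
    then obtain a a' where aa: "a \<in> X" "a' \<in> X" "\<phi> a = \<phi> a'" "a 0 \<noteq> a' 0" "\<forall>i. i < 0 \<longrightarrow> a i = a' i"
    proof -
      have "\<exists>a\<in>X. \<exists>a'\<in>X. \<phi> a = \<phi> a' \<and> a 0 \<noteq> a' 0 \<and> (\<forall>i. (\<lambda>i. i < 0) i \<longrightarrow> a i = a' i)"
      proof (rule limit_pair[OF cl code \<open>infinite L\<close>])
        fix D assume "D \<in> L" then show "A D \<in> X \<and> A' D \<in> X \<and> \<phi> (A D) = \<phi> (A' D) \<and> A D 0 \<noteq> A' D 0"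
          using AA by blast
      next
        fix D i assume "D \<in> L" "(\<lambda>i. i < 0) i" "nat \<bar>i\<bar> \<le> D"
        then show "A D i = A' D i" unfolding L_def by auto
      qed
      then show ?thesis using that by auto
    qed
    have "\<forall>n\<ge>Suc k. agree k (shift_pow (- int n) a) (shift_pow (- int n) a')" for k
      using aa(5) unfolding agree_def shift_pow_def by auto
    then have "left_asymptotic a a'" unfolding left_asymptotic_def by blast
    moreover have "a \<noteq> a'" using aa(4) by auto
    ultimately show False using bc aa unfolding bi_closing_def by blast
  next
    assume "infinite R"
    then obtain a a' where aa: "a \<in> X" "a' \<in> X" "\<phi> a = \<phi> a'" "a 0 \<noteq> a' 0" "\<forall>i. i > 0 \<longrightarrow> a i = a' i"
    proof -
      have "\<exists>a\<in>X. \<exists>a'\<in>X. \<phi> a = \<phi> a' \<and> a 0 \<noteq> a' 0 \<and> (\<forall>i. (\<lambda>i. i > 0) i \<longrightarrow> a i = a' i)"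
      proof (rule limit_pair[OF cl code \<open>infinite R\<close>])
        fix D assume "D \<in> R" then show "A D \<in> X \<and> A' D \<in> X \<and> \<phi> (A D) = \<phi> (A' D) \<and> A D 0 \<noteq> A' D 0"
          using AA by blast
      next
        fix D i assume "D \<in> R" "(\<lambda>i. i > 0) i" "nat \<bar>i\<bar> \<le> D"
        then show "A D i = A' D i" unfolding R_def by auto
      qed
      then show ?thesis using that by auto
    qed
    have "\<forall>n\<ge>Suc k. agree k (shift_pow (int n) a) (shift_pow (int n) a')" for k
      using aa(5) unfolding agree_def shift_pow_def by auto
    then have "right_asymptotic a a'" unfolding right_asymptotic_def by blast
    moreover have "a \<noteq> a'" using aa(4) by auto
    ultimately show False using bc aa unfolding bi_closing_def by blast
  qed
qed



lemma pat_nth: "j < 2*k+1 \<Longrightarrow> pat k f ! j = f (- int k + int j)"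
  unfolding pat_def by (simp add: nth_upto)

lemma main_le:
  fixes X :: "(int \<Rightarrow> 'a::finite) set" and Y :: "(int \<Rightarrow> 'b::finite) set"
    and \<phi> :: "(int \<Rightarrow> 'a) \<Rightarrow> (int \<Rightarrow> 'b)"
  assumes X: "shift_space X" and Ysp: "shift_space Y" and irr: "irreducible Y"
    and code: "is_code X Y \<phi>" and op: "open_code X Y \<phi>"
    and D: "\<forall>x\<in>X. \<forall>x'\<in>X. \<phi> x = \<phi> x' \<and> agree D x x' \<longrightarrow> x = x'"
    and y1: "y1 \<in> Y" and y2: "y2 \<in> Y"
  shows "finite (fib X \<phi> y1) \<and> card (fib X \<phi> y1) \<le> card (fib X \<phi> y2)"
proof -
  have cl: "closed_set X" and inv: "shift ` X = X" using X unfolding shift_space_def by auto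
  have invY: "shift ` Y = Y" using Ysp unfolding shift_space_def by auto
  define P where "P y = pat D ` fib X \<phi> y" for y
  have injP: "inj_on (pat D) (fib X \<phi> y)" for y
  proof (rule inj_onI)
    fix x x' assume "x \<in> fib X \<phi> y" "x' \<in> fib X \<phi> y" "pat D x = pat D x'"
    then show "x = x'" using D unfolding fib_def agree_pat by auto
  qed
  have finP: "finite (P y)" for y
    unfolding P_def by (rule finite_subset[OF _ finite_pats[of D]]) auto
  have finF: "finite (fib X \<phi> y)" for y
    using finP[of y] injP[of y] unfolding P_def by (rule finite_imageD)
  have cardP: "card (P y) = card (fib X \<phi> y)" for y
    unfolding P_def using injP by (rule card_image)
  have cont: "\<forall>x\<in>X. \<forall>n. \<exists>m. \<forall>x'\<in>X. agree m x x' \<longrightarrow> agree n (\<phi> x) (\<phi> x')"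
    using code unfolding is_code_def by blast
  have lsc: "\<exists>m. \<forall>y'\<in>Y. agree m y y' \<longrightarrow> P y \<subseteq> P y'" if "y \<in> Y" for y
  proof -
    have "\<exists>m. \<forall>y'\<in>Y. agree m y y' \<longrightarrow> s \<in> P y'" if s: "s \<in> P y" for s
    proof -
      obtain x where x: "x \<in> X" "\<phi> x = y" "pat D x = s" using s unfolding P_def fib_def by auto
      define U where "U = {x'\<in>X. agree D x x'}"
      have "open_in_space X U" unfolding open_in_space_def U_def
        using agree_trans by blast
      then have "open_in_space Y (\<phi> ` U)" using op unfolding open_code_def by blast
      moreover have "y \<in> \<phi> ` U" using x unfolding U_def agree_def by auto
      ultimately obtain m where m: "\<forall>y'\<in>Y. agree m y y' \<longrightarrow> y' \<in> \<phi> ` U"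
        unfolding open_in_space_def by blast
      have "s \<in> P y'" if yy: "y' \<in> Y" "agree m y y'" for y'
      proof -
        obtain x' where "x' \<in> U" "y' = \<phi> x'" using m yy by blast
        then show ?thesis unfolding U_def P_def fib_def using x agree_pat by auto
      qed
      then show ?thesis by blast
    qed
    then obtain f where f: "\<forall>s\<in>P y. \<forall>y'\<in>Y. agree (f s) y y' \<longrightarrow> s \<in> P y'" by metis
    define m where "m = Max (insert 0 (f ` P y))"
    have "f s \<le> m" if "s \<in> P y" for s unfolding m_def using finP that by simp
    then have "\<forall>y'\<in>Y. agree m y y' \<longrightarrow> P y \<subseteq> P y'" using f agree_mono by blast
    then show ?thesis ..
  qed
  obtain m where m: "\<forall>y'\<in>Y. agree m y1 y' \<longrightarrow> P y1 \<subseteq> P y'" using lsc[OF y1] by blast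
  have approx: "\<exists>w\<in>Y. agree N y2 w \<and> card (fib X \<phi> y1) \<le> card (fib X \<phi> w)" for N
  proof -
    define u where "u = pat N y2"
    define v where "v = pat m y1"
    have lu: "length u = 2*N+1" and lv: "length v = 2*m+1" unfolding u_def v_def by (simp_all add: pat_len)
    have "is_word Y u" unfolding is_word_def occurs_def
    proof (intro bexI[OF _ y2] exI[of _ "- int N"] allI impI)
      fix j assume "j < length u" then show "y2 (- int N + int j) = u ! j" unfolding u_def lu
        using lu by (simp add: pat_nth u_def)
    qed
    moreover have "is_word Y v" unfolding is_word_def occurs_def
    proof (intro bexI[OF _ y1] exI[of _ "- int m"] allI impI)
      fix j assume "j < length v" then show "y1 (- int m + int j) = v ! j"
        using lv by (simp add: pat_nth v_def)
    qed
    ultimately obtain w where "is_word Y (u @ w @ v)" using irr unfolding irreducible_def by blast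
    then obtain z i where z: "z \<in> Y" and zi: "\<And>j. j < length (u @ w @ v) \<Longrightarrow> z (i + int j) = (u @ w @ v) ! j"
      unfolding is_word_def occurs_def by blast
    define w1 where "w1 = shift_pow (i + int N) z"
    define w2 where "w2 = shift_pow (i + int (length u + length w) + int m) z"
    have w1Y: "w1 \<in> Y" unfolding w1_def by (rule shift_mem[OF invY z])
    have w2Y: "w2 \<in> Y" unfolding w2_def by (rule shift_mem[OF invY z])
    have ag1: "agree N y2 w1" unfolding agree_def
    proof (intro allI impI)
      fix t :: int assume t: "- int N \<le> t \<and> t \<le> int N"
      define j where "j = nat (t + int N)"
      have j: "j < length u" "int j = t + int N" using t lu unfolding j_def by auto
      have "w1 t = z (i + int j)" unfolding w1_def shift_pow_def using j by (simp add: algebra_simps)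
      also have "\<dots> = (u @ w @ v) ! j" using zi[of j] j(1) by simp
      also have "\<dots> = u ! j" using j by (simp add: nth_append)
      also have "\<dots> = y2 t" unfolding u_def using j lu by (simp add: pat_nth u_def)
      finally show "y2 t = w1 t" by simp
    qed
    have ag2: "agree m y1 w2" unfolding agree_def
    proof (intro allI impI)
      fix t :: int assume t: "- int m \<le> t \<and> t \<le> int m"
      define j where "j = nat (t + int m)"
      have j: "j < length v" "int j = t + int m" using t lv unfolding j_def by auto
      have "w2 t = z (i + int (length u + length w + j))" unfolding w2_def shift_pow_def using j
        by (simp add: algebra_simps)
      also have "\<dots> = (u @ w @ v) ! (length u + length w + j)" using zi[of "length u + length w + j"] j(1) by simp
      also have "\<dots> = v ! j" by (simp add: nth_append)
      also have "\<dots> = y1 t" using j lv by (simp add: pat_nth v_def)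
      finally show "y1 t = w2 t" by simp
    qed
    have "card (fib X \<phi> y1) = card (P y1)" using cardP by simp
    also have "\<dots> \<le> card (P w2)" using m w2Y ag2 finP by (simp add: card_mono)
    also have "\<dots> = card (fib X \<phi> z)" unfolding cardP w2_def card_fib_shift[OF inv code] ..
    also have "\<dots> = card (fib X \<phi> w1)" unfolding w1_def card_fib_shift[OF inv code] ..
    finally show ?thesis using w1Y ag1 by blast
  qed
  then obtain W where W: "\<And>N. W N \<in> Y \<and> agree N y2 (W N) \<and> card (fib X \<phi> y1) \<le> card (fib X \<phi> (W N))"
    by metis
  have "finite ((\<lambda>N. P (W N)) ` UNIV)"
  proof (rule finite_subset)
    show "(\<lambda>N. P (W N)) ` UNIV \<subseteq> Pow (range (pat D))" unfolding P_def by auto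
    show "finite (Pow (range (pat D :: (int \<Rightarrow> 'a) \<Rightarrow> _)))" using finite_pats by simp
  qed
  then obtain N0 where I: "infinite {N. P (W N) = P (W N0)}"
    using pigeonhole_infinite[OF infinite_UNIV_nat] by auto
  define I where "I = {N. P (W N) = P (W N0)}"
  have sub: "P (W N0) \<subseteq> P y2"
  proof
    fix s assume s: "s \<in> P (W N0)"
    have ex: "\<exists>x. x \<in> X \<and> \<phi> x = W N \<and> pat D x = s" if "N \<in> I" for N
    proof -
      have "s \<in> P (W N)" using that s unfolding I_def by simp
      then show ?thesis unfolding P_def fib_def by auto
    qed
    define xs where "xs N = (SOME x. x \<in> X \<and> \<phi> x = W N \<and> pat D x = s)" for N
    have xs: "xs N \<in> X \<and> \<phi> (xs N) = W N \<and> pat D (xs N) = s" if "N \<in> I" for N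
      unfolding xs_def using someI_ex[OF ex[OF that]] .
    obtain c where c: "\<And>k N. \<exists>n\<in>I. N \<le> n \<and> agree k c (xs n)"
      using cluster[of I xs] I unfolding I_def by blast
    have cX: "c \<in> X"
    proof (rule closed_memI[OF cl])
      fix k
      obtain n where "n \<in> I" "agree k c (xs n)" using c[where k=k and N=0] by blast
      then show "\<exists>y\<in>X. agree k c y" using xs by blast
    qed
    have "pat D c = s"
    proof -
      obtain n where "n \<in> I" "agree D c (xs n)" using c[where k=D and N=0] by blast
      then show ?thesis using xs agree_pat by metis
    qed
    moreover have "\<phi> c = y2"
    proof (rule agree_all)
      fix k
      obtain m' where m': "\<forall>x'\<in>X. agree m' c x' \<longrightarrow> agree k (\<phi> c) (\<phi> x')" using cont cX by blast
      obtain n where n: "n \<in> I" "k \<le> n" "agree m' c (xs n)" using c[where k=m' and N=k] by blast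
      have "agree k (\<phi> c) (W n)" using m' xs[OF n(1)] n(3) by metis
      moreover have "agree k (W n) y2" using W[of n] n(2) agree_mono agree_sym by metis
      ultimately show "agree k (\<phi> c) y2" by (rule agree_trans)
    qed
    ultimately show "s \<in> P y2" unfolding P_def fib_def using cX by blast
  qed
  have "card (fib X \<phi> y1) \<le> card (fib X \<phi> (W N0))" using W by blast
  also have "\<dots> = card (P (W N0))" using cardP by simp
  also have "\<dots> \<le> card (P y2)" by (rule card_mono[OF finP sub])
  also have "\<dots> = card (fib X \<phi> y2)" using cardP by simp
  finally show ?thesis using finF by blast
qed


theorem corollary2p9:
  fixes X :: "(int \<Rightarrow> 'a::finite) set" and Y :: "(int \<Rightarrow> 'b::finite) set"
    and \<phi> :: "(int \<Rightarrow> 'a) \<Rightarrow> (int \<Rightarrow> 'b)"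
  assumes "shift_space X" and "shift_space Y" and "irreducible Y"
    and "is_code X Y \<phi>" and "open_code X Y \<phi>" and "bi_closing X \<phi>"
  shows "constant_to_one X Y \<phi>"
proof -
  obtain D where D: "\<forall>x\<in>X. \<forall>x'\<in>X. \<phi> x = \<phi> x' \<and> agree D x x' \<longrightarrow> x = x'"
    using separation[OF assms(1,4,6)] by blast
  note ml = main_le[OF assms(1-5) D]
  show ?thesis
  proof (cases "Y = {}")
    case True then show ?thesis unfolding constant_to_one_def by blast
  next
    case False
    then obtain y0 where y0: "y0 \<in> Y" by blast
    have "finite {x\<in>X. \<phi> x = y} \<and> card {x\<in>X. \<phi> x = y} = card (fib X \<phi> y0)" if "y \<in> Y" for y
      using ml[OF that y0] ml[OF y0 that] unfolding fib_def by auto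
    then show ?thesis unfolding constant_to_one_def by blast
  qed
qed

end
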